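(* Let $\mathcal C$ be a binary linear code presented by an $m\times n$ parity-check matrix $H$, let $\mathbf c\in\mathcal C$ be a codeword, let $\boldsymbol\omega$ be a linear programming pseudocodeword, and let $\Psi=\{\boldsymbol\psi_1,\dots,\boldsymbol\psi_r\}$ be a set of linear programming pseudocodewords, with $\Psi^{\mathbf c}=\{\boldsymbol\psi_1^{\mathbf c},\dots,\boldsymbol\psi_r^{\mathbf c}\}$. Let $\phi_{\mathbf c}:\mathbb R^n\to\mathbb R^n$ be defined by $x_i\mapsto(-1)^{c_i}x_i$ for all $i=1,\dots,n$. Then $\phi_{\mathbf c}$ is an isometry from the recovery cone $\mathcal K_{\boldsymbol\omega}$ onto $\mathcal K_{\boldsymbol\omega^{\mathbf c}}$, and an isometry from the approximation cone $\mathcal R_{\boldsymbol\omega,\Psi}$ onto $\mathcal R_{\boldsymbol\omega^{\mathbf c},\Psi^{\mathbf c}}$.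
   Context: For a row $\mathbf h_j$ of $H=(h_{j,i})$ let $N(\mathbf h_j)=\{i : h_{j,i}=1\}$. The fundamental polytope $\mathcal P(H)$ is written as $\{\mathbf x: A\mathbf x\ge\mathbf b\}$ with the following constraints (rows of $A$ with right-hand sides): $x_i\ge 0$ and $-x_i\ge -1$ for each $i=1,\dots,n$; and for every row index $j$ and every odd-sized $S\subseteq N(\mathbf h_j)$, $-\sum_{i\in S}x_i+\sum_{i'\in N(\mathbf h_j)\setminus S}x_{i'}\ge 1-|S|$. A linear programming (LP) pseudocodeword is an extreme point of $\mathcal P(H)$. For $\mathbf c\in\mathcal C$ and $\mathbf x\in\mathcal P(H)$, the relative point $\mathbf x^{\mathbf c}$ has $i$th coordinate $|x_i-c_i|$; if $\boldsymbol\omega$ is an LP pseudocodeword, so is $\boldsymbol\omega^{\mathbf c}$. The recovery cone $\mathcal K_{\boldsymbol\omega}$ is the set of conic (nonnegative) combinations of the rows of $A$ whose constraints are active (hold with equality) at $\boldsymbol\omega$. The approximation cone $\mathcal R_{\boldsymbol\omega,\Psi}$ is $\{\mathbf x\in\mathbb R^n : (\boldsymbol\psi_i-\boldsymbol\omega)^T\mathbf x\ge 0 \text{ for } i=1,\dots,r\}$. *)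

theory Defs
  imports "HOL-Analysis.Analysis"
begin

text \<open>A binary parity-check matrix with row index type 'm and column index type 'n
  is a function H :: 'm \<Rightarrow> 'n \<Rightarrow> bool (True = entry 1). Binary vectors are
  'n \<Rightarrow> bool (True = 1).\<close>

definition nbhd :: "('m \<Rightarrow> 'n \<Rightarrow> bool) \<Rightarrow> 'm \<Rightarrow> 'n set" where
  "nbhd H j = {i. H j i}"

definition is_codeword :: "('m::finite \<Rightarrow> 'n::finite \<Rightarrow> bool) \<Rightarrow> ('n \<Rightarrow> bool) \<Rightarrow> bool" where
  "is_codeword H c \<longleftrightarrow> (\<forall>j. even (card {i. H j i \<and> c i}))"

definition bit :: "bool \<Rightarrow> real" where
  "bit b = (if b then 1 else 0)"

text \<open>The rows of A together with their right-hand sides, as pairs (row, rhs).\<close>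
definition constraints :: "('m::finite \<Rightarrow> 'n::finite \<Rightarrow> bool) \<Rightarrow> ((real^'n) \<times> real) set" where
  "constraints H =
     {(axis i 1, 0) | i. True}
   \<union> {(axis i (-1), -1) | i. True}
   \<union> {((\<chi> i. if i \<in> S then -1 else if i \<in> nbhd H j then 1 else 0), 1 - real (card S))
        | j S. S \<subseteq> nbhd H j \<and> odd (card S)}"

definition fund_polytope :: "('m::finite \<Rightarrow> 'n::finite \<Rightarrow> bool) \<Rightarrow> (real^'n) set" where
  "fund_polytope H = {x. \<forall>(a, b) \<in> constraints H. a \<bullet> x \<ge> b}"

definition LP_pseudocodeword :: "('m::finite \<Rightarrow> 'n::finite \<Rightarrow> bool) \<Rightarrow> real^'n \<Rightarrow> bool" where
  "LP_pseudocodeword H w \<longleftrightarrow> w extreme_point_of (fund_polytope H)"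

definition relative_point :: "('n::finite \<Rightarrow> bool) \<Rightarrow> real^'n \<Rightarrow> real^'n" where
  "relative_point c x = (\<chi> i. \<bar>x $ i - bit (c i)\<bar>)"

definition active_rows :: "('m::finite \<Rightarrow> 'n::finite \<Rightarrow> bool) \<Rightarrow> real^'n \<Rightarrow> (real^'n) set" where
  "active_rows H w = {a. \<exists>b. (a, b) \<in> constraints H \<and> a \<bullet> w = b}"

definition recovery_cone :: "('m::finite \<Rightarrow> 'n::finite \<Rightarrow> bool) \<Rightarrow> real^'n \<Rightarrow> (real^'n) set" where
  "recovery_cone H w =
     {y. \<exists>F l. finite F \<and> F \<subseteq> active_rows H w \<and> (\<forall>a\<in>F. l a \<ge> 0) \<and> y = (\<Sum>a\<in>F. l a *\<^sub>R a)}"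

definition approx_cone :: "real^'n \<Rightarrow> (nat \<Rightarrow> real^'n) \<Rightarrow> nat \<Rightarrow> (real^'n) set" where
  "approx_cone w psi r = {x. \<forall>i\<in>{1..r}. (psi i - w) \<bullet> x \<ge> 0}"

definition phi :: "('n::finite \<Rightarrow> bool) \<Rightarrow> real^'n \<Rightarrow> real^'n" where
  "phi c x = (\<chi> i. (-1) ^ (if c i then 1 else 0) * x $ i)"

definition isometry_onto :: "('a::metric_space \<Rightarrow> 'b::metric_space) \<Rightarrow> 'a set \<Rightarrow> 'b set \<Rightarrow> bool" where
  "isometry_onto f A B \<longleftrightarrow> f ` A = B \<and> (\<forall>x\<in>A. \<forall>y\<in>A. dist (f x) (f y) = dist x y)"

end

theory Submission imports Defs begin

definition sg :: "('n \<Rightarrow> bool) \<Rightarrow> 'n \<Rightarrow> real" where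
  "sg c i = (if c i then -1 else 1)"

lemma phi_nth[simp]: "phi c x $ i = sg c i * x $ i"
  by (simp add: phi_def sg_def)

lemma sg_sq[simp]: "sg c i * sg c i = 1"
  by (simp add: sg_def)

lemma phi_phi[simp]: "phi c (phi c x) = x"
  by (simp add: vec_eq_iff mult.assoc[symmetric])

lemma phi_inner: "phi c x \<bullet> phi c y = x \<bullet> y"
  unfolding inner_vec_def by (rule sum.cong) (auto simp: sg_def)

lemma phi_inner2: "phi c x \<bullet> y = x \<bullet> phi c y"
  using phi_inner[of c x "phi c y"] by simp

lemma linear_phi: "linear (phi c)"
  by (rule linearI) (auto simp: vec_eq_iff algebra_simps)

lemma phi_diff: "phi c (x - y) = phi c x - phi c y"
  by (simp add: vec_eq_iff algebra_simps)

lemma phi_dist: "dist (phi c x) (phi c y) = dist x y"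
  by (simp add: dist_norm norm_eq_sqrt_inner phi_diff[symmetric] phi_inner)

lemma inj_phi: "inj (phi c)"
  by (metis injI phi_phi)

lemma iso_lemma:
  assumes "\<And>x. x \<in> A \<Longrightarrow> phi c x \<in> B" "\<And>x. x \<in> B \<Longrightarrow> phi c x \<in> A"
  shows "isometry_onto (phi c) A B"
  unfolding isometry_onto_def
proof (intro conjI ballI)
  show "phi c ` A = B"
  proof
    show "phi c ` A \<subseteq> B" using assms(1) by blast
    show "B \<subseteq> phi c ` A"
    proof
      fix y assume "y \<in> B"
      then have "y = phi c (phi c y)" "phi c y \<in> A" using assms(2) by auto
      then show "y \<in> phi c ` A" by blast
    qed
  qed
qed (simp add: phi_dist)

definition cube :: "(real^'n) set" where
  "cube = {x. \<forall>i. 0 \<le> x $ i \<and> x $ i \<le> 1}"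

lemma polytope_cube:
  assumes "x \<in> fund_polytope H" shows "x \<in> cube"
proof -
  have "axis i 1 \<bullet> x \<ge> 0" "axis i (-1) \<bullet> x \<ge> -1" for i
    using assms unfolding fund_polytope_def constraints_def by fastforce+
  then show ?thesis unfolding cube_def by (auto simp: inner_axis')
qed

lemma pcw_cube: "LP_pseudocodeword H w \<Longrightarrow> w \<in> cube"
  unfolding LP_pseudocodeword_def extreme_point_of_def by (blast intro: polytope_cube)

lemma rel_nth: "x \<in> cube \<Longrightarrow> relative_point c x $ i = (if c i then 1 - x $ i else x $ i)"
  by (auto simp: relative_point_def cube_def bit_def)

lemma rel_cube: "x \<in> cube \<Longrightarrow> relative_point c x \<in> cube"
  by (auto simp: rel_nth cube_def)

lemma rel_rel: "x \<in> cube \<Longrightarrow> relative_point c (relative_point c x) = x"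
  by (auto simp: vec_eq_iff rel_nth rel_cube)

lemma rel_diff: "x \<in> cube \<Longrightarrow> y \<in> cube \<Longrightarrow>
   relative_point c x - relative_point c y = phi c (x - y)"
  by (auto simp: vec_eq_iff rel_nth sg_def)

lemma approx_dir:
  assumes "w \<in> cube" "\<forall>i\<in>{1..r}. psi i \<in> cube" "x \<in> approx_cone w psi r"
  shows "phi c x \<in> approx_cone (relative_point c w) (\<lambda>i. relative_point c (psi i)) r"
  using assms unfolding approx_cone_def
  by (auto simp: rel_diff phi_inner)


definition rowv :: "('m \<Rightarrow> 'n::finite \<Rightarrow> bool) \<Rightarrow> 'm \<Rightarrow> 'n set \<Rightarrow> real^'n" where
  "rowv H j S = (\<chi> i. if i \<in> S then -1 else if i \<in> nbhd H j then 1 else 0)"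

lemma phi_axis: "phi c (axis i v) = axis i (sg c i * v)"
  by (auto simp: vec_eq_iff axis_def)

lemma rowv_inner:
  fixes w :: "real^'n::finite"
  assumes "S \<subseteq> nbhd H j"
  shows "rowv H j S \<bullet> w + real (card S) =
    (\<Sum>i\<in>UNIV. if i \<in> S then 1 - w $ i else if i \<in> nbhd H j then w $ i else 0)"
proof -
  have "real (card S) = (\<Sum>i\<in>UNIV. if i \<in> S then 1 else 0)"
    by (simp add: sum.If_cases)
  then show ?thesis
    unfolding rowv_def inner_vec_def
    by (auto simp: sum.distrib[symmetric] intro!: sum.cong)
qed

lemma phi_rowv:
  "phi c (rowv H j S) = rowv H j ((S - {i. c i}) \<union> ((nbhd H j \<inter> {i. c i}) - S))"
  if "S \<subseteq> nbhd H j" using that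
  by (auto simp: vec_eq_iff rowv_def sg_def)

lemma card_parity:
  fixes S N C :: "'n::finite set"
  assumes "S \<subseteq> N" "even (card (N \<inter> C))" "odd (card S)"
  shows "odd (card ((S - C) \<union> ((N \<inter> C) - S)))"
proof -
  have d: "card ((S - C) \<union> ((N \<inter> C) - S)) = card (S - C) + card ((N \<inter> C) - S)"
    by (rule card_Un_disjoint) auto
  have e1: "card S = card (S - C) + card (S \<inter> C)"
    by (metis Diff_Diff_Int add.commute card_Diff_subset_Int finite finite_Int card_Int_Diff Int_commute)
  have e2: "card (N \<inter> C) = card ((N \<inter> C) - S) + card (S \<inter> C)"
  proof -
    have "N \<inter> C \<inter> S = S \<inter> C" using assms(1) by auto
    then show ?thesis using card_Int_Diff[of "N \<inter> C" S] by (simp add: add.commute)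
  qed
  show ?thesis using d e1 e2 assms(2,3) by presburger
qed

lemma active_map:
  fixes H :: "'m::finite \<Rightarrow> 'n::finite \<Rightarrow> bool"
  assumes cw: "is_codeword H c" and w: "w \<in> cube" and a: "a \<in> active_rows H w"
  shows "phi c a \<in> active_rows H (relative_point c w)"
proof -
  obtain b where ab: "(a, b) \<in> constraints H" "a \<bullet> w = b"
    using a unfolding active_rows_def by blast
  let ?w = "relative_point c w"
  consider (p) i where "a = axis i 1" "b = 0" | (m) i where "a = axis i (-1)" "b = -1"
    | (r) j S where "a = rowv H j S" "b = 1 - real (card S)" "S \<subseteq> nbhd H j" "odd (card S)"
    using ab(1) unfolding constraints_def rowv_def by blast
  then show ?thesis
  proof cases
    case (p i)
    show ?thesis
    proof (cases "c i")
      case True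
      then have "(phi c a, -1) \<in> constraints H" "phi c a \<bullet> ?w = -1"
        using p ab w by (auto simp: constraints_def phi_axis sg_def inner_axis' rel_nth)
      then show ?thesis unfolding active_rows_def by blast
    next
      case False
      then have "(phi c a, 0) \<in> constraints H" "phi c a \<bullet> ?w = 0"
        using p ab w by (auto simp: constraints_def phi_axis sg_def inner_axis' rel_nth)
      then show ?thesis unfolding active_rows_def by blast
    qed
  next
    case (m i)
    show ?thesis
    proof (cases "c i")
      case True
      then have "(phi c a, 0) \<in> constraints H" "phi c a \<bullet> ?w = 0"
        using m ab w by (auto simp: constraints_def phi_axis sg_def inner_axis' rel_nth)
      then show ?thesis unfolding active_rows_def by blast
    next
      case False
      then have "(phi c a, -1) \<in> constraints H" "phi c a \<bullet> ?w = -1"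
        using m ab w by (auto simp: constraints_def phi_axis sg_def inner_axis' rel_nth)
      then show ?thesis unfolding active_rows_def by blast
    qed
  next
    case (r j S)
    define C where "C = {i. c i}"
    define S' where "S' = (S - C) \<union> ((nbhd H j \<inter> C) - S)"
    have S'sub: "S' \<subseteq> nbhd H j" using r by (auto simp: S'_def)
    have ev: "even (card (nbhd H j \<inter> C))"
    proof -
      have "nbhd H j \<inter> C = {i. H j i \<and> c i}" by (auto simp: nbhd_def C_def)
      then show ?thesis using cw unfolding is_codeword_def by simp
    qed
    have odd': "odd (card S')" unfolding S'_def by (rule card_parity) (use r ev in auto)
    have pa: "phi c a = rowv H j S'" using r by (simp add: phi_rowv S'_def C_def)
    have "rowv H j S' \<bullet> ?w + real (card S') = rowv H j S \<bullet> w + real (card S)"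
      unfolding rowv_inner[OF S'sub] rowv_inner[OF r(3)]
      using w r(3) by (intro sum.cong) (auto simp: S'_def C_def rel_nth)
    then have "phi c a \<bullet> ?w = 1 - real (card S')" using pa ab(2) r by simp
    moreover have "(phi c a, 1 - real (card S')) \<in> constraints H"
      using pa S'sub odd' unfolding constraints_def rowv_def by blast
    ultimately show ?thesis unfolding active_rows_def by blast
  qed
qed

lemma cone_map:
  fixes H :: "'m::finite \<Rightarrow> 'n::finite \<Rightarrow> bool"
  assumes cw: "is_codeword H c" and w: "w \<in> cube" and y: "y \<in> recovery_cone H w"
  shows "phi c y \<in> recovery_cone H (relative_point c w)"
proof -
  obtain F l where F: "finite F" "F \<subseteq> active_rows H w" "\<forall>a\<in>F. l a \<ge> 0"
    "y = (\<Sum>a\<in>F. l a *\<^sub>R a)" using y unfolding recovery_cone_def by blast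
  have "phi c y = (\<Sum>a\<in>F. l a *\<^sub>R phi c a)"
    using F(4) linear_phi[of c] by (simp add: linear_sum linear_scale)
  also have "\<dots> = (\<Sum>b\<in>phi c ` F. (l \<circ> phi c) b *\<^sub>R b)"
    by (subst sum.reindex) (auto intro: inj_on_subset[OF inj_phi])
  finally have "phi c y = (\<Sum>b\<in>phi c ` F. (l \<circ> phi c) b *\<^sub>R b)" .
  moreover have "phi c ` F \<subseteq> active_rows H (relative_point c w)"
    using F(2) active_map[OF cw w] by blast
  moreover have "\<forall>b\<in>phi c ` F. (l \<circ> phi c) b \<ge> 0" using F(3) by auto
  ultimately show ?thesis unfolding recovery_cone_def using F(1) by blast
qed

theorem proposition5:
  fixes H :: "'m::finite \<Rightarrow> 'n::finite \<Rightarrow> bool"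
    and c :: "'n \<Rightarrow> bool"
    and w :: "real^'n"
    and psi :: "nat \<Rightarrow> real^'n"
    and r :: nat
  assumes "is_codeword H c"
    and "LP_pseudocodeword H w"
    and "\<forall>i\<in>{1..r}. LP_pseudocodeword H (psi i)"
  shows "isometry_onto (phi c) (recovery_cone H w) (recovery_cone H (relative_point c w))
       \<and> isometry_onto (phi c) (approx_cone w psi r)
           (approx_cone (relative_point c w) (\<lambda>i. relative_point c (psi i)) r)"
proof
  have w: "w \<in> cube" using assms(2) by (rule pcw_cube)
  have ps: "\<forall>i\<in>{1..r}. psi i \<in> cube" using assms(3) pcw_cube by blast
  show "isometry_onto (phi c) (recovery_cone H w) (recovery_cone H (relative_point c w))"
  proof (rule iso_lemma)
    fix x assume "x \<in> recovery_cone H w"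
    then show "phi c x \<in> recovery_cone H (relative_point c w)"
      by (rule cone_map[OF assms(1) w])
  next
    fix x assume "x \<in> recovery_cone H (relative_point c w)"
    from cone_map[OF assms(1) rel_cube[OF w] this] show "phi c x \<in> recovery_cone H w"
      by (simp add: rel_rel[OF w])
  qed
  show "isometry_onto (phi c) (approx_cone w psi r)
           (approx_cone (relative_point c w) (\<lambda>i. relative_point c (psi i)) r)"
  proof (rule iso_lemma)
    fix x assume "x \<in> approx_cone w psi r"
    then show "phi c x \<in> approx_cone (relative_point c w) (\<lambda>i. relative_point c (psi i)) r"
      by (rule approx_dir[OF w ps])
  next
    fix x assume x: "x \<in> approx_cone (relative_point c w) (\<lambda>i. relative_point c (psi i)) r"
    have ps': "\<forall>i\<in>{1..r}. relative_point c (psi i) \<in> cube" using ps rel_cube by blast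
    have "phi c x \<in> approx_cone (relative_point c (relative_point c w))
            (\<lambda>i. relative_point c (relative_point c (psi i))) r"
      by (rule approx_dir[OF rel_cube[OF w] ps' x])
    moreover have "approx_cone (relative_point c (relative_point c w))
            (\<lambda>i. relative_point c (relative_point c (psi i))) r = approx_cone w psi r"
      using ps by (auto simp: approx_cone_def rel_rel[OF w] rel_rel)
    ultimately show "phi c x \<in> approx_cone w psi r" by simp
  qed
qed

end
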